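(* Let $n \ge 1$ be an integer and let $t \in \overline{D}(1+2^{2n-1}, 2^{-2n})$. Let $z \in \mathbb{C}_2$ satisfy $|z + \tfrac12| = 2^k$, where $k$ is a real number with $-2n < k < 1$. Then $|f_t(z) + \tfrac12| = 2^{k+2}$.
   Context: Let $|\cdot|$ denote the $2$-adic absolute value on $\mathbb{C}_2$, normalized by $|2| = 1/2$. The notation $\overline{D}(a,\delta)$ denotes the closed disk $\{z \in \mathbb{C}_2 : |z-a| \le \delta\}$. For $t \in \mathbb{C}_2$, let $f_t(z) = -\tfrac32 t(-2z^3+3z^2)+1$. *)

theory Defs
  imports Complex_Main "HOL-Computational_Algebra.Polynomial"
begin

definition nonarch_absval :: "('a::field \<Rightarrow> real) \<Rightarrow> bool" where
  "nonarch_absval N \<longleftrightarrow>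
     (\<forall>x. 0 \<le> N x) \<and> (\<forall>x. N x = 0 \<longleftrightarrow> x = 0) \<and>
     (\<forall>x y. N (x * y) = N x * N y) \<and>
     (\<forall>x y. N (x + y) \<le> max (N x) (N y))"

text \<open>Abstract model of (C_2, |.|): an algebraically closed field, complete with respect to a
  non-archimedean absolute value normalized by |2| = 1/2 (so it restricts to the 2-adic
  absolute value on the rationals).\<close>
definition C2_like :: "('a::field \<Rightarrow> real) \<Rightarrow> bool" where
  "C2_like N \<longleftrightarrow>
     nonarch_absval N \<and> N 2 = 1/2 \<and>
     (\<forall>p :: 'a poly. 0 < degree p \<longrightarrow> (\<exists>z. poly p z = 0)) \<and>
     (\<forall>X :: nat \<Rightarrow> 'a. (\<forall>e>0. \<exists>M. \<forall>m\<ge>M. \<forall>n\<ge>M. N (X m - X n) < e)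
        \<longrightarrow> (\<exists>L. \<forall>e>0. \<exists>M. \<forall>n\<ge>M. N (X n - L) < e))"

definition f_map :: "'a::field \<Rightarrow> 'a \<Rightarrow> 'a" where
  "f_map t z = - (3/2) * t * (- 2 * z ^ 3 + 3 * z ^ 2) + 1"

end

theory Submission
  imports Defs
begin

lemma na_basic:
  assumes "nonarch_absval N"
  shows "N 1 = 1" "\<And>x. N (- x) = N x" "\<And>x y. N (x * y) = N x * N y"
    "\<And>x. 0 \<le> N x" "\<And>x y. N (x + y) \<le> max (N x) (N y)" "\<And>x. N x = 0 \<longleftrightarrow> x = 0"
proof -
  have m: "\<And>x y. N (x * y) = N x * N y" and z: "\<And>x. N x = 0 \<longleftrightarrow> x = 0"
    and p: "\<And>x. 0 \<le> N x" and t: "\<And>x y. N (x + y) \<le> max (N x) (N y)"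
    using assms unfolding nonarch_absval_def by auto
  have "N 1 = N 1 * N 1" using m[of 1 1] by simp
  moreover have "N 1 \<noteq> 0" using z[of 1] by simp
  ultimately show n1: "N 1 = 1" by (metis mult_cancel_left1)
  have "N (-1) * N (-1) = 1" using m[of "-1" "-1"] n1 by simp
  hence "N (-1) = 1" using p[of "-1"]
    by (metis abs_of_nonneg power2_eq_square real_sqrt_abs real_sqrt_one)
  thus "\<And>x. N (- x) = N x" using m by (metis mult_1 mult_minus_left)
  show "\<And>x y. N (x * y) = N x * N y" "\<And>x. 0 \<le> N x" "\<And>x y. N (x + y) \<le> max (N x) (N y)"
    "\<And>x. N x = 0 \<longleftrightarrow> x = 0" using m p t z by auto
qed

lemma na_strict:
  assumes "nonarch_absval N" "N x < N y"
  shows "N (x + y) = N y"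
proof -
  note b = na_basic[OF assms(1)]
  have "N (x + y) \<le> N y" using b(5)[of x y] assms(2) by simp
  moreover have "N y \<le> max (N (x + y)) (N (- x))" using b(5)[of "x+y" "-x"] by simp
  ultimately show ?thesis using b(2)[of x] assms(2) by linarith
qed

lemma na_pow:
  assumes "nonarch_absval N"
  shows "N (x ^ m) = N x ^ m"
  using na_basic[OF assms] by (induction m) auto

theorem lemma1:
  fixes N :: "'a::field \<Rightarrow> real" and n :: nat and t z :: 'a and k :: real
  assumes "C2_like N"
    and "n \<ge> 1"
    and "N (t - (1 + 2 ^ (2 * n - 1))) \<le> 2 powr (- real (2 * n))"
    and "- real (2 * n) < k" and "k < 1"
    and "N (z + 1/2) = 2 powr k"
  shows "N (f_map t z + 1/2) = 2 powr (k + 2)"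
proof -
  have na: "nonarch_absval N" and N2: "N 2 = 1/2" using assms(1) unfolding C2_like_def by auto
  note b = na_basic[OF na]
  have two: "(2::'a) \<noteq> 0" using N2 b(6)[of 2] by auto
  have four: "(4::'a) \<noteq> 0" using two by (metis mult_eq_0_iff numeral_Bit0 mult_2)
  have eight: "(8::'a) \<noteq> 0" using four by (metis mult_eq_0_iff numeral_Bit0 mult_2)
  have sixteen: "(16::'a) \<noteq> 0" using four by (metis mult_eq_0_iff numeral_Bit0 mult_2)
  define w where "w = z + 1/2"
  define e where "e = t - (1 + 2 ^ (2 * n - 1))"
  define q :: real where "q = (1/2) ^ (2*n)"
  define a where "a = (2::real) powr k"
  have apos: "a > 0" unfolding a_def by simp
  have Nw: "N w = a" using assms(6) unfolding w_def a_def .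
  have q2: "2 powr (- real (2 * n)) = q" unfolding q_def
  proof -
    have "2 powr (real (2 * n)) = (2::real) ^ (2*n)" by (metis powr_realpow zero_less_numeral)
    thus "2 powr (- real (2 * n)) = (1/2::real) ^ (2*n)" by (simp add: powr_minus power_one_over inverse_eq_divide)
  qed
  have Ne: "N e \<le> q" using assms(3) q2 unfolding e_def by simp
  have aq: "a > q" unfolding a_def using assms(4) q2 powr_less_mono[of "- real (2 * n)" k "2::real"]
    by simp
  have a2: "a < 2" unfolding a_def using assms(5) powr_less_mono[of k 1 "2::real"] by simp
  have a4: "2 powr (k+2) = 4 * a" unfolding a_def by (simp add: powr_add)
  have qpos: "q > 0" unfolding q_def by simp
  have N3: "N 3 = 1"
  proof -
    have "N (1 + 2) \<le> 1" using b(5)[of 1 2] b(1) N2 by simp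
    moreover have "N 1 \<le> max (N 3) (N (-2))" using b(5)[of 3 "-2"] by simp
    ultimately show ?thesis using b(1) b(2)[of 2] N2 by simp
  qed
  have Nh: "N (1/2) = 2"
  proof -
    have "(2::'a) \<noteq> 0" using N2 b(6)[of 2] by auto
    hence "N (2 * (1/2)) = 1" using b(1) by simp
    thus ?thesis using b(3)[of 2 "1/2"] N2 by simp
  qed
  have NP: "N ((2::'a) ^ (2*n-1)) = 2 * q"
  proof -
    have h1: "N ((2::'a) ^ (2*n-1)) = (1/2) ^ (2*n-1)" using na_pow[OF na, of 2 "2*n-1"] N2 by simp
    have "2*n = Suc (2*n-1)" using assms(2) by simp
    hence "(1/2::real) ^ (2*n) = (1/2) * (1/2) ^ (2*n-1)" by (metis power_Suc)
    thus ?thesis using h1 unfolding q_def by simp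
  qed
  have Nt1: "N (1 - t) = 2 * q"
  proof -
    have "1 - t = - (e + 2 ^ (2*n-1))" unfolding e_def by (simp add: algebra_simps)
    hence "N (1 - t) = N (- (e + 2 ^ (2*n-1)))" by (simp only:)
    also have "\<dots> = N (e + 2 ^ (2*n-1))" by (rule b(2))
    finally have "N (1 - t) = N (e + 2 ^ (2*n-1))" .
    also have "\<dots> = 2 * q" using na_strict[OF na, of e "2 ^ (2*n-1)"] NP Ne qpos by simp
    finally show ?thesis .
  qed
  have Nt: "N t = 1"
  proof -
    have "t = (e + 2 ^ (2*n-1)) + 1" unfolding e_def by simp
    moreover have "N (e + 2 ^ (2*n-1)) < 1"
    proof -
      have "N (e + 2 ^ (2*n-1)) = 2 * q" using na_strict[OF na, of e "2 ^ (2*n-1)"] NP Ne qpos by simp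
      moreover have "q \<le> 1/4" unfolding q_def using assms(2)
      proof -
        have "(1/2::real) ^ (2*n) \<le> (1/2) ^ 2" using assms(2) by (intro power_decreasing) auto
        moreover have "(1/2::real) ^ 2 = 1/4" by (simp add: power2_eq_square)
        ultimately show "(1/2::real) ^ (2*n) \<le> 1/4" by linarith
      qed
      ultimately show ?thesis by simp
    qed
    ultimately show ?thesis using na_strict[OF na, of "e + 2 ^ (2*n-1)" 1] b(1) by simp
  qed
  have N9h: "N (9/2) = 2"
  proof -
    have "(9/2::'a) = 3 * 3 * (1/2)" by simp
    hence "N (9/2) = N (3 * 3 * (1/2))" by (simp only:)
    also have "\<dots> = N 3 * N 3 * N (1/2)" by (simp only: b(3))
    finally show ?thesis using N3 Nh by simp
  qed
  have N6w: "N (- 6 * w) = a / 2"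
  proof -
    have "(- 6 * w) = - (2 * 3 * w)" by simp
    hence "N (- 6 * w) = N (2 * 3 * w)" using b(2) by (simp only:)
    also have "\<dots> = N 2 * N 3 * N w" using b(3) by (simp only:)
    finally have "N (- 6 * w) = N 2 * N 3 * N w" .
    thus ?thesis using N2 N3 Nw by simp
  qed
  have N2w: "N (2 * w^2) = a^2 / 2" using b(3) N2 na_pow[OF na] Nw by simp
  have Ninner: "N (9/2 + (- 6 * w + 2 * w^2)) = 2"
  proof -
    have "a^2 < 2^2" using a2 apos by (intro power_strict_mono) auto
    hence "N (- 6 * w + 2 * w^2) < 2" using b(5)[of "- 6 * w" "2 * w^2"] N6w N2w a2 by simp
    thus ?thesis using na_strict[OF na, of "- 6 * w + 2 * w^2" "9/2"] N9h by (simp add: add.commute)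
  qed
  have Nterm: "N (t * w * (9/2 + (- 6 * w + 2 * w^2))) = 2 * a"
    using b(3) Nt Nw Ninner by simp
  have Nsum: "N ((1 - t) + t * w * (9/2 + (- 6 * w + 2 * w^2))) = 2 * a"
    using na_strict[OF na, of "1 - t"] Nt1 Nterm aq by simp
  have eq: "f_map t z + 1/2 = 3 * (1/2) * ((1 - t) + t * w * (9/2 + (- 6 * w + 2 * w^2)))"
  proof -
    define h :: 'a where "h = 1/2"
    have h2: "2 * h = 1" unfolding h_def using two by simp
    have e1: "(3/2::'a) = 3 * h" "(9/2::'a) = 9 * h" unfolding h_def by simp_all
    have "- (3 * h) * t * (- 2 * z ^ 3 + 3 * z ^ 2) + 1 + h = 3 * h * ((1 - t) + t * (z + h) * (9 * h + (- 6 * (z + h) + 2 * (z + h)^2)))"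
      using h2 by algebra
    thus ?thesis unfolding f_map_def w_def e1 h_def[symmetric] by simp
  qed
  have "N (f_map t z + 1/2) = N 3 * N (1/2) * N ((1 - t) + t * w * (9/2 + (- 6 * w + 2 * w^2)))"
    unfolding eq by (simp only: b(3))
  hence "N (f_map t z + 1/2) = 4 * a" using N3 Nh Nsum by simp
  thus ?thesis using a4 by simp
qed

end
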